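(* For every $n\geq 1$, in the field $\mathbb{Q}(t)$, $$B_{n+1}(t)=A_n(t)B_n(t)-B_{n-1}(t),\qquad\text{where } A_n(t)=t^{-\mu(n)}\left(2\,\frac{t^{\mu(n)}-1}{t-1}+t\right).$$
   Context: The Stern polynomials $B_n(t)\in\mathbb{Z}[t]$ are defined by $B_0(t)=0$, $B_1(t)=1$, and for $n\geq 1$: $B_{2n}(t)=tB_n(t)$, $B_{2n+1}(t)=B_n(t)+B_{n+1}(t)$. For $n\geq 1$, $\mu(n)$ denotes the exponent of the highest power of $2$ dividing $n$. Note $\frac{t^{m}-1}{t-1}=1+t+\dots+t^{m-1}$ (equal to $0$ for $m=0$). *)

theory Defs
  imports "HOL-Computational_Algebra.Polynomial" "HOL-Computational_Algebra.Fraction_Field"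
    "HOL-Computational_Algebra.Factorial_Ring"
begin

function stern :: "nat \<Rightarrow> int poly" where
  "stern n = (if n = 0 then 0 else if n = 1 then 1
              else if even n then [:0, 1:] * stern (n div 2)
              else stern (n div 2) + stern (n div 2 + 1))"
  by auto
termination
  by (relation "measure id") (auto elim!: oddE)

definition to_Qt :: "int poly \<Rightarrow> rat poly fract" where
  "to_Qt p = Fract (map_poly of_int p) 1"

definition tQ :: "rat poly fract" where
  "tQ = Fract [:0, 1:] 1"

definition mu :: "nat \<Rightarrow> nat" where
  "mu n = multiplicity (2::nat) n"

definition A_coef :: "nat \<Rightarrow> rat poly fract" where
  "A_coef n = inverse (tQ ^ mu n) * (2 * ((tQ ^ mu n - 1) / (tQ - 1)) + tQ)"

end

theory Submission
  imports Defs
begin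

declare stern.simps[simp del]

lemma toQ_add: "to_Qt (p + q) = to_Qt p + to_Qt q"
proof -
  have "map_poly rat_of_int (p + q) = map_poly rat_of_int p + map_poly rat_of_int q"
    by (rule poly_eqI) (simp add: coeff_map_poly)
  then show ?thesis unfolding to_Qt_def by simp
qed

lemma toQ_X: "to_Qt ([:0,1:] * p) = tQ * to_Qt p"
proof -
  have "map_poly rat_of_int ([:0,1:] * p) = [:0,1:] * map_poly rat_of_int p"
    by (simp add: map_poly_pCons)
  then show ?thesis unfolding to_Qt_def tQ_def by simp
qed

lemma toQ_pC: "to_Qt (pCons 0 p) = tQ * to_Qt p"
  using toQ_X[of p] by simp

lemma tQ_nz: "tQ \<noteq> 0"
  unfolding tQ_def by (simp add: eq_fract Zero_fract_def)

lemma tQ_n1: "tQ \<noteq> 1"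
proof -
  have "[:0,1:] \<noteq> (1::rat poly)" by (metis degree_pCons_eq_if one_neq_zero degree_1 pCons_eq_iff one_pCons)
  then show ?thesis unfolding tQ_def by (simp add: One_fract_def eq_fract)
qed

lemma stern_even: "k \<ge> 1 \<Longrightarrow> stern (2*k) = [:0,1:] * stern k"
  by (subst stern.simps) simp

lemma stern_odd: "stern (2*k+1) = stern k + stern (k+1)"
proof (cases "k = 0")
  case True then show ?thesis by (simp add: stern.simps)
next
  case False then show ?thesis by (subst stern.simps) simp
qed

lemma mu_odd: "mu (2*k+1) = 0"
  unfolding mu_def by (rule not_dvd_imp_multiplicity_0) presburger

lemma mu_even: "k \<ge> 1 \<Longrightarrow> mu (2*k) = Suc (mu k)"
  unfolding mu_def by (rule multiplicity_times_same) auto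

definition G :: "nat \<Rightarrow> rat poly fract" where
  "G m = (tQ ^ m - 1) / (tQ - 1)"

lemma G_step: "2 * tQ ^ Suc m + tQ * (2 * G m + tQ) = tQ * (2 * G (Suc m) + tQ)"
proof -
  have d: "tQ - 1 \<noteq> 0" using tQ_n1 by simp
  show ?thesis unfolding G_def using d
    by (simp add: field_simps)
qed

abbreviation b where "b n \<equiv> to_Qt (stern n)"

lemma key: "n \<ge> 1 \<Longrightarrow> tQ ^ mu n * (b (n+1) + b (n-1)) = (2 * G (mu n) + tQ) * b n"
proof (induction n rule: less_induct)
  case (less n)
  show ?case
  proof (cases "even n")
    case False
    then obtain k where n: "n = 2*k+1" by (metis oddE)
    have "b (n+1) = tQ * b (k+1)"
      using n stern_even[of "k+1"] by (simp add: toQ_pC)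
    moreover have "b (n-1) = tQ * b k"
    proof (cases "k = 0")
      case True then show ?thesis using n by (simp add: to_Qt_def stern.simps[of 0] Zero_fract_def)
    next
      case False then show ?thesis using n stern_even[of k] by (simp add: toQ_pC)
    qed
    moreover have "mu n = 0" using n mu_odd by simp
    moreover have "b n = b k + b (k+1)" using n stern_odd toQ_add by simp
    ultimately show ?thesis using n by (simp add: G_def algebra_simps)
  next
    case True
    then obtain k where n: "n = 2*k" by blast
    with less.prems have k: "k \<ge> 1" by simp
    have IH: "tQ ^ mu k * (b (k+1) + b (k-1)) = (2 * G (mu k) + tQ) * b k"
      using less.IH[of k] k n by simp
    have e1: "b (n+1) = b k + b (k+1)" using n stern_odd[of k] toQ_add by simp
    have e2: "b (n-1) = b (k-1) + b k"
    proof -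
      have "n - 1 = 2*(k-1)+1" "k - 1 + 1 = k" using n k by auto
      then show ?thesis using stern_odd[of "k-1"] toQ_add by simp
    qed
    have e3: "b n = tQ * b k" using n stern_even[OF k] by (simp add: toQ_pC)
    have "tQ ^ mu n * (b (n+1) + b (n-1)) = 2 * tQ ^ Suc (mu k) * b k + tQ * (tQ ^ mu k * (b (k+1) + b (k-1)))"
      using e1 e2 n mu_even[OF k] by (simp add: algebra_simps)
    also have "\<dots> = (2 * tQ ^ Suc (mu k) + tQ * (2 * G (mu k) + tQ)) * b k"
      using IH by (simp add: algebra_simps)
    also have "\<dots> = (2 * G (mu n) + tQ) * b n"
      using G_step[of "mu k"] e3 n mu_even[OF k] by (simp add: algebra_simps)
    finally show ?thesis .
  qed
qed

theorem mainTheorem12: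
  fixes n :: nat
  assumes "n \<ge> 1"
  shows "to_Qt (stern (n + 1)) = A_coef n * to_Qt (stern n) - to_Qt (stern (n - 1))"
proof -
  have nz: "tQ ^ mu n \<noteq> 0" using tQ_nz by simp
  have "A_coef n * b n = inverse (tQ ^ mu n) * ((2 * G (mu n) + tQ) * b n)"
    unfolding A_coef_def G_def by simp
  also have "\<dots> = b (n+1) + b (n-1)" using key[OF assms] nz by (simp flip: key[OF assms])
  finally show ?thesis by simp
qed

end
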